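(* Let $P$ be an $n\times n$ doubly stochastic matrix. Then $P$ is a Sarymsakov matrix if and only if $|F_P(\mathcal A)|>|\mathcal A|$ for every nonempty proper subset $\mathcal A\subsetneq\mathcal N$.
   Context: $\mathcal N=\{1,\ldots,n\}$. A matrix is stochastic if it is entrywise nonnegative with row sums $1$, and doubly stochastic if in addition its column sums are $1$. For stochastic $P$ and $\mathcal A\subseteq\mathcal N$, $F_P(\mathcal A)=\{j:\ p_{ij}>0\text{ for some } i\in\mathcal A\}$. A Sarymsakov matrix is a stochastic $P$ such that for any disjoint nonempty $\mathcal A,\tilde{\mathcal A}\subseteq\mathcal N$, either $F_P(\mathcal A)\cap F_P(\tilde{\mathcal A})\neq\emptyset$, or $F_P(\mathcal A)\cap F_P(\tilde{\mathcal A})=\emptyset$ and $|F_P(\mathcal A)\cup F_P(\tilde{\mathcal A})|>|\mathcal A\cup\tilde{\mathcal A}|$. *)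

theory Defs
  imports "HOL-Analysis.Analysis"
begin

text \<open>n x n real matrices are indexed by a finite type 'n; the index set N is UNIV.\<close>

definition stochastic :: "real^'n^'n \<Rightarrow> bool" where
  "stochastic P \<longleftrightarrow> (\<forall>i j. P $ i $ j \<ge> 0) \<and> (\<forall>i. (\<Sum>j\<in>UNIV. P $ i $ j) = 1)"

definition doubly_stochastic :: "real^'n^'n \<Rightarrow> bool" where
  "doubly_stochastic P \<longleftrightarrow> stochastic P \<and> (\<forall>j. (\<Sum>i\<in>UNIV. P $ i $ j) = 1)"

definition F :: "real^'n^'n \<Rightarrow> 'n set \<Rightarrow> 'n set" where
  "F P A = {j. \<exists>i\<in>A. P $ i $ j > 0}"

definition sarymsakov :: "real^'n^'n \<Rightarrow> bool" where
  "sarymsakov P \<longleftrightarrow> stochastic P \<and>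
     (\<forall>A B. A \<noteq> {} \<longrightarrow> B \<noteq> {} \<longrightarrow> A \<inter> B = {} \<longrightarrow>
        F P A \<inter> F P B \<noteq> {} \<or>
        (F P A \<inter> F P B = {} \<and> card (F P A \<union> F P B) > card (A \<union> B)))"

end

theory Submission
  imports Defs
begin

lemma key:
  fixes P :: "real^'n^'n"
  assumes "doubly_stochastic P"
  shows "real (card (F P A)) = real (card A) + (\<Sum>j\<in>F P A. \<Sum>i\<in>-A. P$i$j)"
proof -
  have nn: "\<And>i j. P$i$j \<ge> 0" and rs: "\<And>i. (\<Sum>j\<in>UNIV. P$i$j) = 1"
    and cs: "\<And>j. (\<Sum>i\<in>UNIV. P$i$j) = 1"
    using assms unfolding doubly_stochastic_def stochastic_def by auto
  have row: "(\<Sum>j\<in>F P A. P$i$j) = 1" if "i \<in> A" for i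
  proof -
    have "(\<Sum>j\<in>F P A. P$i$j) = (\<Sum>j\<in>UNIV. P$i$j)"
    proof (rule sum.mono_neutral_left)
      show "\<forall>j\<in>UNIV - F P A. P$i$j = 0"
      proof
        fix j assume "j \<in> UNIV - F P A"
        then have "\<not> P$i$j > 0" using that unfolding F_def by blast
        then show "P$i$j = 0" using nn[of i j] by linarith
      qed
    qed auto
    then show ?thesis using rs by simp
  qed
  have "real (card (F P A)) = (\<Sum>j\<in>F P A. \<Sum>i\<in>UNIV. P$i$j)" using cs by simp
  also have "\<dots> = (\<Sum>j\<in>F P A. (\<Sum>i\<in>A. P$i$j) + (\<Sum>i\<in>-A. P$i$j))"
  proof (rule sum.cong)
    fix j
    have "UNIV = A \<union> -A" by simp
    then have "(\<Sum>i\<in>UNIV. P$i$j) = (\<Sum>i\<in>A \<union> -A. P$i$j)" by simp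
    also have "\<dots> = (\<Sum>i\<in>A. P$i$j) + (\<Sum>i\<in>-A. P$i$j)"
      by (rule sum.union_disjoint) auto
    finally show "(\<Sum>i\<in>UNIV. P$i$j) = (\<Sum>i\<in>A. P$i$j) + (\<Sum>i\<in>-A. P$i$j)" .
  qed simp
  also have "\<dots> = (\<Sum>i\<in>A. \<Sum>j\<in>F P A. P$i$j) + (\<Sum>j\<in>F P A. \<Sum>i\<in>-A. P$i$j)"
    by (simp add: sum.distrib sum.swap[of _ "F P A"])
  also have "(\<Sum>i\<in>A. \<Sum>j\<in>F P A. P$i$j) = real (card A)"
    using row by simp
  finally show ?thesis .
qed

theorem lemma5:
  fixes P :: "real^'n^'n"
  assumes "doubly_stochastic P"
  shows "sarymsakov P \<longleftrightarrow> (\<forall>A. A \<noteq> {} \<and> A \<subset> UNIV \<longrightarrow> card (F P A) > card A)"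
proof
  have nn: "\<And>i j. P$i$j \<ge> 0" and st: "stochastic P"
    using assms unfolding doubly_stochastic_def stochastic_def by auto
  have ge: "card A \<le> card (F P A)" for A
  proof -
    have "0 \<le> (\<Sum>j\<in>F P A. \<Sum>i\<in>-A. P$i$j)" using nn by (simp add: sum_nonneg)
    then show ?thesis using key[OF assms, of A] by linarith
  qed
  {
    assume S: "sarymsakov P"
    show "\<forall>A. A \<noteq> {} \<and> A \<subset> UNIV \<longrightarrow> card (F P A) > card A"
    proof (intro allI impI, rule ccontr)
      fix A :: "'n set"
      assume A: "A \<noteq> {} \<and> A \<subset> UNIV" and nlt: "\<not> card A < card (F P A)"
      hence eq: "card (F P A) = card A" using ge[of A] by linarith
      hence "(\<Sum>j\<in>F P A. \<Sum>i\<in>-A. P$i$j) = 0" using key[OF assms, of A] by simp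
      hence z: "\<forall>j\<in>F P A. \<forall>i\<in>-A. P$i$j = 0"
        using nn by (simp add: sum_nonneg_eq_0_iff sum_nonneg)
      have disj: "F P A \<inter> F P (-A) = {}" using z unfolding F_def by fastforce
      have "-A \<noteq> {}" using A by auto
      have "A \<inter> -A = {}" by simp
      then have "card (F P A \<union> F P (-A)) > card (A \<union> -A)"
      proof -
        have "F P A \<inter> F P (-A) \<noteq> {} \<or> (F P A \<inter> F P (-A) = {} \<and> card (F P A \<union> F P (-A)) > card (A \<union> -A))"
          using S A \<open>-A \<noteq> {}\<close> \<open>A \<inter> -A = {}\<close> unfolding sarymsakov_def by (metis (no_types, lifting))
        then show ?thesis using disj by simp
      qed
      moreover have "card (F P A \<union> F P (-A)) \<le> card (A \<union> -A)"
        by (simp add: card_mono)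
      ultimately show False by simp
    qed
  }
  {
    assume H: "\<forall>A. A \<noteq> {} \<and> A \<subset> UNIV \<longrightarrow> card (F P A) > card A"
    have FU: "F P (A \<union> B) = F P A \<union> F P B" for A B unfolding F_def by auto
    show "sarymsakov P" unfolding sarymsakov_def
    proof (intro conjI st allI impI)
      fix A B :: "'n set"
      assume a: "A \<noteq> {}" "B \<noteq> {}" "A \<inter> B = {}"
      show "F P A \<inter> F P B \<noteq> {} \<or> (F P A \<inter> F P B = {} \<and> card (F P A \<union> F P B) > card (A \<union> B))"
      proof (cases "F P A \<inter> F P B = {}")
        case True
        show ?thesis
        proof (cases "A \<union> B = UNIV")
          case False
          then have "card (F P (A \<union> B)) > card (A \<union> B)" using H a by auto
          then show ?thesis using True FU by auto
        next
          case U: True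
          have pa: "A \<subset> UNIV" "B \<subset> UNIV" using a by auto
          have "card (F P A) > card A" "card (F P B) > card B" using H a pa by auto
          moreover have "card (F P A \<union> F P B) = card (F P A) + card (F P B)"
            using True by (simp add: card_Un_disjoint)
          moreover have "card (A \<union> B) = card A + card B" using a by (simp add: card_Un_disjoint)
          moreover have "card (F P A \<union> F P B) \<le> card (A \<union> B)" using U by (simp add: card_mono)
          ultimately show ?thesis by linarith
        qed
      qed simp
    qed
  }
qed

end
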